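(* Let $1<p<\infty$, let $V\in L^\infty_{\mathrm{loc}}(\mathbb{R}^n)$ with $V\ge1$ a.e., and let $f\in L^1(\mathbb{R}^n)$. Let $u$ be a localized asymptotic solution of $-\operatorname{div}(|\nabla u|^{p-2}\nabla u)+V|u|^{p-2}u=f$ in $\mathbb{R}^n$ such that $u\in W^{1,p}_{\mathrm{loc}}(\mathbb{R}^n)\cap L^\infty_{\mathrm{loc}}(\mathbb{R}^n)$. Then for all $\psi\in C_c^\infty(\mathbb{R}^n)$, \[ \int_{\mathbb{R}^n}|\nabla u|^{p-2}\nabla u\cdot\nabla\psi\,dx+\int_{\mathbb{R}^n}V|u|^{p-2}u\,\psi\,dx=\int_{\mathbb{R}^n}f\psi\,dx. \]
   Context: $\Lambda^p(\mathbb{R}^n)$: measurable $u$ with $\int\min(|u|,1)^p\,dx<\infty$. $T_t(s)=\max\{-t,\min\{s,t\}\}$. $\mathrm{X}=\{v\in W^{1,p}(\mathbb{R}^n):\int V|v|^p\,dx<\infty\}$. For $\alpha,t>0$ and measurable $v,\phi$, $\mathcal H_{\alpha,t}(v,\phi)=T_t(T_\alpha(v)-\phi)-T_t(T_\alpha(v))$. A function $u\in\Lambda^p(\mathbb{R}^n)$ is a localized asymptotic solution if (i) $T_\alpha(u)\in\mathrm{X}$ for all $\alpha>0$, and (ii) for every $t>0$, every compactly supported $\phi\in W^{1,p}(\mathbb{R}^n)\cap L^\infty(\mathbb{R}^n)$ and every $\alpha>t+\|\phi\|_\infty$, \[\int|\nabla T_\alpha(u)|^{p-2}\nabla T_\alpha(u)\cdot\nabla\mathcal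 H_{\alpha,t}(u,\phi)\,dx+\int V|T_\alpha(u)|^{p-2}T_\alpha(u)\mathcal H_{\alpha,t}(u,\phi)\,dx=\int f\,\mathcal H_{\alpha,t}(u,\phi)\,dx.\] *)

theory Defs
  imports "HOL-Analysis.Analysis" "HOL-Probability.Essential_Supremum"
begin

(* Euclidean space R^n is modelled by an arbitrary type 'a :: euclidean_space
   (n = DIM('a)), with Lebesgue measure "lebesgue". *)

(* C^infinity: differentiable everywhere, and every partial derivative is again C^infinity
   (greatest fixed point, hence all partial derivatives of all orders exist). *)
coinductive smooth :: "('a::euclidean_space \<Rightarrow> real) \<Rightarrow> bool" where
  "(\<forall>x. f differentiable (at x)) \<Longrightarrow>
   (\<forall>b\<in>Basis. smooth (\<lambda>x. frechet_derivative f (at x) b)) \<Longrightarrow> smooth f"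

definition compact_support :: "('a::euclidean_space \<Rightarrow> real) \<Rightarrow> bool" where
  "compact_support \<phi> \<longleftrightarrow> (\<exists>K. compact K \<and> (\<forall>x. x \<notin> K \<longrightarrow> \<phi> x = 0))"

definition test_function :: "('a::euclidean_space \<Rightarrow> real) \<Rightarrow> bool" where
  "test_function \<phi> \<longleftrightarrow> smooth \<phi> \<and> compact_support \<phi>"

definition cgrad :: "('a::euclidean_space \<Rightarrow> real) \<Rightarrow> 'a \<Rightarrow> 'a" where
  "cgrad \<phi> x = (\<Sum>b\<in>Basis. frechet_derivative \<phi> (at x) b *\<^sub>R b)"

definition locally_integrable :: "('a::euclidean_space \<Rightarrow> real) \<Rightarrow> bool" where
  "locally_integrable u \<longleftrightarrow> (\<forall>K. compact K \<longrightarrow> set_integrable lebesgue K u)"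

definition weak_gradient :: "('a::euclidean_space \<Rightarrow> real) \<Rightarrow> ('a \<Rightarrow> 'a) \<Rightarrow> bool" where
  "weak_gradient u g \<longleftrightarrow> locally_integrable u \<and>
     (\<forall>b\<in>Basis. locally_integrable (\<lambda>x. g x \<bullet> b)) \<and>
     (\<forall>\<phi>. test_function \<phi> \<longrightarrow> (\<forall>b\<in>Basis.
        (\<integral>x. u x * frechet_derivative \<phi> (at x) b \<partial>lebesgue)
          = - (\<integral>x. (g x \<bullet> b) * \<phi> x \<partial>lebesgue)))"

(* the (a.e. unique) weak gradient *)
definition wgrad :: "('a::euclidean_space \<Rightarrow> real) \<Rightarrow> 'a \<Rightarrow> 'a" where
  "wgrad u = (SOME g. weak_gradient u g)"

definition Lp :: "real \<Rightarrow> ('a::euclidean_space \<Rightarrow> real) \<Rightarrow> bool" where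
  "Lp p u \<longleftrightarrow> u \<in> borel_measurable lebesgue \<and> integrable lebesgue (\<lambda>x. \<bar>u x\<bar> powr p)"

definition Lp_loc :: "real \<Rightarrow> ('a::euclidean_space \<Rightarrow> real) \<Rightarrow> bool" where
  "Lp_loc p u \<longleftrightarrow> u \<in> borel_measurable lebesgue \<and>
     (\<forall>K. compact K \<longrightarrow> set_integrable lebesgue K (\<lambda>x. \<bar>u x\<bar> powr p))"

definition Linf :: "('a::euclidean_space \<Rightarrow> real) \<Rightarrow> bool" where
  "Linf u \<longleftrightarrow> u \<in> borel_measurable lebesgue \<and> esssup lebesgue (\<lambda>x. ereal \<bar>u x\<bar>) < \<infinity>"

definition Linf_loc :: "('a::euclidean_space \<Rightarrow> real) \<Rightarrow> bool" where
  "Linf_loc u \<longleftrightarrow> u \<in> borel_measurable lebesgue \<and>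
     (\<forall>K. compact K \<longrightarrow> (\<exists>C. AE x in lebesgue. x \<in> K \<longrightarrow> \<bar>u x\<bar> \<le> C))"

definition W1p :: "real \<Rightarrow> ('a::euclidean_space \<Rightarrow> real) \<Rightarrow> bool" where
  "W1p p u \<longleftrightarrow> Lp p u \<and> (\<exists>g. weak_gradient u g \<and> Lp p (\<lambda>x. norm (g x)))"

definition W1p_loc :: "real \<Rightarrow> ('a::euclidean_space \<Rightarrow> real) \<Rightarrow> bool" where
  "W1p_loc p u \<longleftrightarrow> Lp_loc p u \<and> (\<exists>g. weak_gradient u g \<and> Lp_loc p (\<lambda>x. norm (g x)))"

definition Lambda_p :: "real \<Rightarrow> ('a::euclidean_space \<Rightarrow> real) \<Rightarrow> bool" where
  "Lambda_p p u \<longleftrightarrow> u \<in> borel_measurable lebesgue \<and>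
     integrable lebesgue (\<lambda>x. (min \<bar>u x\<bar> 1) powr p)"

definition trunc :: "real \<Rightarrow> real \<Rightarrow> real" where
  "trunc t s = max (- t) (min s t)"

definition Xsp :: "real \<Rightarrow> ('a::euclidean_space \<Rightarrow> real) \<Rightarrow> ('a \<Rightarrow> real) \<Rightarrow> bool" where
  "Xsp p V v \<longleftrightarrow> W1p p v \<and> integrable lebesgue (\<lambda>x. V x * \<bar>v x\<bar> powr p)"

definition Hfun :: "real \<Rightarrow> real \<Rightarrow> ('a \<Rightarrow> real) \<Rightarrow> ('a \<Rightarrow> real) \<Rightarrow> 'a \<Rightarrow> real" where
  "Hfun \<alpha> t v \<phi> x = trunc t (trunc \<alpha> (v x) - \<phi> x) - trunc t (trunc \<alpha> (v x))"

(* localized asymptotic solution of -div(|\<nabla>u|^{p-2}\<nabla>u) + V|u|^{p-2}u = f.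
   Convention: |a|^{p-2}a is 0 at a = 0 (0 powr _ = 0 in Isabelle). *)
definition localized_asymptotic_solution ::
  "real \<Rightarrow> ('a::euclidean_space \<Rightarrow> real) \<Rightarrow> ('a \<Rightarrow> real) \<Rightarrow> ('a \<Rightarrow> real) \<Rightarrow> bool" where
  "localized_asymptotic_solution p V f u \<longleftrightarrow> Lambda_p p u \<and>
     (\<forall>\<alpha>>0. Xsp p V (\<lambda>x. trunc \<alpha> (u x))) \<and>
     (\<forall>t>0. \<forall>\<phi> \<alpha>. W1p p \<phi> \<and> Linf \<phi> \<and> compact_support \<phi> \<and>
        ereal \<alpha> > ereal t + esssup lebesgue (\<lambda>x. ereal \<bar>\<phi> x\<bar>) \<longrightarrow>
        (let Tu = (\<lambda>x. trunc \<alpha> (u x)); H = Hfun \<alpha> t u \<phi> in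
          (\<integral>x. norm (wgrad Tu x) powr (p - 2) * (wgrad Tu x \<bullet> wgrad H x) \<partial>lebesgue)
          + (\<integral>x. V x * \<bar>Tu x\<bar> powr (p - 2) * Tu x * H x \<partial>lebesgue)
          = (\<integral>x. f x * H x \<partial>lebesgue)))"

end

theory Submission
  imports Defs "HOL-Computational_Algebra.Polynomial"
begin

coinductive csm :: "(real \<Rightarrow> real) \<Rightarrow> bool" where
  "(\<forall>x. h differentiable (at x)) \<Longrightarrow> csm (deriv h) \<Longrightarrow> csm h"

lemma csm_diff: "csm h \<Longrightarrow> h differentiable (at x)"
  by (erule csm.cases) auto

lemma csm_deriv: "csm h \<Longrightarrow> csm (deriv h)"
  by (erule csm.cases) auto

lemma csm_DERIV: "csm h \<Longrightarrow> (h has_real_derivative deriv h x) (at x)"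
  using csm_diff DERIV_deriv_iff_real_differentiable by blast

definition EP :: "real poly \<Rightarrow> real \<Rightarrow> real" where
  "EP q x = (if x > 0 then poly q (1/x) * exp (-(1/x)) else 0)"

lemma poly_exp_lim: fixes q :: "real poly" shows "((\<lambda>z. poly q z * exp (-z)) \<longlongrightarrow> 0) at_top"
proof -
  have eq: "(\<lambda>z. poly q z * exp (-z)) = (\<lambda>z::real. \<Sum>i\<le>degree q. coeff q i * (z ^ i / exp z))"
    by (auto simp: poly_altdef sum_distrib_right exp_minus sum_divide_distrib field_simps)
  have "((\<lambda>z::real. \<Sum>i\<le>degree q. coeff q i * (z ^ i / exp z)) \<longlongrightarrow> (\<Sum>i\<le>degree q. coeff q i * 0)) at_top"
    by (intro tendsto_sum tendsto_mult tendsto_const tendsto_power_div_exp_0)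
  then show ?thesis unfolding eq by simp
qed

definition dq :: "real poly \<Rightarrow> real poly" where
  "dq q = [:0,0,1:] * (q - pderiv q)"

lemma EP_DERIV: "(EP q has_real_derivative EP (dq q) x) (at x)"
proof (cases "x > 0")
  case True
  have d: "((\<lambda>x. poly q (1/x) * exp (-(1/x))) has_real_derivative EP (dq q) x) (at x)"
    using True
    by (auto intro!: derivative_eq_intros DERIV_chain2[OF poly_DERIV] simp: EP_def dq_def
        algebra_simps power2_eq_square divide_simps)
  show ?thesis
    apply (rule has_field_derivative_transform_within_open[OF d, of "{0<..}"])
    using True by (auto simp: EP_def)
next
  case False
  show ?thesis
  proof (cases "x < 0")
    case True
    have d: "((\<lambda>x. 0) has_real_derivative EP (dq q) x) (at x)"
      using True by (auto simp: EP_def)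
    show ?thesis
      apply (rule has_field_derivative_transform_within_open[OF d, of "{..<0}"])
      using True by (auto simp: EP_def)
  next
    case False
    with \<open>\<not> x > 0\<close> have x0: "x = 0" by simp
    have "((\<lambda>y. (EP q y - EP q 0) / (y - 0)) \<longlongrightarrow> 0) (at 0)"
    proof (rule filterlim_split_at)
      show "((\<lambda>y. (EP q y - EP q 0) / (y - 0)) \<longlongrightarrow> 0) (at_left 0)"
        apply (rule tendsto_eventually)
        apply (rule eventually_mono[OF eventually_at_left_real[of "-1" 0]]) by (auto simp: EP_def)
    next
      have lim: "((\<lambda>y. poly (pCons 0 q) (1/y) * exp (-(1/y))) \<longlongrightarrow> 0) (at_right 0)"
        using filterlim_compose[OF poly_exp_lim[of "pCons 0 q"] filterlim_inverse_at_top_right]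
        by (simp add: inverse_eq_divide)
      show "((\<lambda>y. (EP q y - EP q 0) / (y - 0)) \<longlongrightarrow> 0) (at_right 0)"
        apply (rule Lim_transform_eventually[OF lim])
        apply (rule eventually_mono[OF eventually_at_right_real[of 0 1]]) by (auto simp: EP_def field_simps)
    qed
    then show ?thesis using x0
      by (simp add: has_field_derivative_iff EP_def)
  qed
qed

lemma csm_EP: "csm (EP q)"
proof -
  have "\<exists>q. h = EP q \<Longrightarrow> csm h" for h
  proof (coinduction arbitrary: h rule: csm.coinduct)
    case (csm h)
    then obtain q where h: "h = EP q" by blast
    have "deriv h = EP (dq q)"
      using EP_DERIV DERIV_imp_deriv h by blast
    then show ?case using h EP_DERIV real_differentiable_def by blast
  qed
  then show ?thesis by blast
qed

lemma csm_const: "csm (\<lambda>x. c)"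
proof -
  have "\<exists>c. h = (\<lambda>x. c) \<Longrightarrow> csm h" for h
  proof (coinduction arbitrary: h rule: csm.coinduct)
    case (csm h)
    then obtain c where h: "h = (\<lambda>x. c)" by blast
    have "deriv h = (\<lambda>x. 0)" unfolding h by (rule ext, rule DERIV_imp_deriv, rule DERIV_const)
    then show ?case using h by auto
  qed
  then show ?thesis by blast
qed

lemma csm_affine: "csm h \<Longrightarrow> csm (\<lambda>x. k * h (m * x + c))"
proof -
  have "\<exists>g k. csm g \<and> h = (\<lambda>x. k * g (m * x + c)) \<Longrightarrow> csm h" for h
  proof (coinduction arbitrary: h rule: csm.coinduct)
    case (csm h)
    then obtain g k where g: "csm g" and h: "h = (\<lambda>x. k * g (m * x + c))" by blast
    have D: "(h has_real_derivative (k * m) * deriv g (m * x + c)) (at x)" for x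
      unfolding h
      by (auto intro!: derivative_eq_intros DERIV_chain2[OF csm_DERIV[OF g]])
    have "deriv h = (\<lambda>x. (k * m) * deriv g (m * x + c))"
      using D DERIV_imp_deriv by blast
    then show ?case using D csm_deriv[OF g] real_differentiable_def by blast
  qed
  then show "csm h \<Longrightarrow> csm (\<lambda>x. k * h (m * x + c))" by blast
qed

lemma csm_mult:
  assumes "csm f" "csm g" shows "csm (\<lambda>x. f x * g x)"
proof -
  have "\<exists>J F G. finite (J::nat set) \<and> (\<forall>j\<in>J. csm (F j) \<and> csm (G j)) \<and>
          h = (\<lambda>x. \<Sum>j\<in>J. F j x * G j x) \<Longrightarrow> csm h" for h
  proof (coinduction arbitrary: h rule: csm.coinduct)
    case (csm h)
    then obtain J F G where J: "finite (J::nat set)" and FG: "\<forall>j\<in>J. csm (F j) \<and> csm (G j)"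
      and h: "h = (\<lambda>x. \<Sum>j\<in>J. F j x * G j x)" by blast
    have D: "(h has_real_derivative (\<Sum>j\<in>J. deriv (F j) x * G j x + F j x * deriv (G j) x)) (at x)" for x
      unfolding h using FG
      by (auto intro!: derivative_eq_intros csm_DERIV simp: algebra_simps)
    define F2 where "F2 k = (if even k then deriv (F (k div 2)) else F (k div 2))" for k
    define G2 where "G2 k = (if even k then G (k div 2) else deriv (G (k div 2)))" for k
    define J2 where "J2 = (\<lambda>j. 2*j) ` J \<union> (\<lambda>j. 2*j+1) ` J"
    have "(\<Sum>k\<in>J2. F2 k x * G2 k x) = (\<Sum>k\<in>(\<lambda>j. 2*j) ` J. F2 k x * G2 k x) + (\<Sum>k\<in>(\<lambda>j. 2*j+1) ` J. F2 k x * G2 k x)" for x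
      unfolding J2_def using J by (intro sum.union_disjoint) (auto, presburger)
    also have "\<dots>x = (\<Sum>j\<in>J. deriv (F j) x * G j x) + (\<Sum>j\<in>J. F j x * deriv (G j) x)" for x
      by (subst sum.reindex, simp add: inj_on_def)+ (simp add: F2_def G2_def)
    finally have eq: "deriv h = (\<lambda>x. \<Sum>k\<in>J2. F2 k x * G2 k x)"
      using D DERIV_imp_deriv by (metis (no_types, lifting) ext sum.distrib)
    have "\<forall>k\<in>J2. csm (F2 k) \<and> csm (G2 k)"
      using FG by (auto simp: J2_def F2_def G2_def intro: csm_deriv)
    moreover have "finite J2" using J by (simp add: J2_def)
    ultimately show ?case using D eq real_differentiable_def by blast
  qed
  from this[of "\<lambda>x. f x * g x"] show ?thesis using assms
    apply -
    apply (erule meta_mp)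
    apply (rule exI[of _ "{0}"], rule exI[of _ "\<lambda>_. f"], rule exI[of _ "\<lambda>_. g"])
    by simp
qed

lemma smooth_prod:
  fixes G :: "'a::euclidean_space \<Rightarrow> real \<Rightarrow> real"
  assumes "\<forall>i\<in>Basis. csm (G i)"
  shows "smooth (\<lambda>x::'a. \<Prod>i\<in>Basis. G i (x \<bullet> i))"
proof -
  have "\<exists>G. (\<forall>i\<in>Basis. csm (G i)) \<and> f = (\<lambda>x::'a. \<Prod>i\<in>Basis. G i (x \<bullet> i)) \<Longrightarrow> smooth f" for f
  proof (coinduction arbitrary: f rule: smooth.coinduct)
    case (smooth f)
    then obtain G where G: "\<forall>i\<in>Basis. csm (G i)" and f: "f = (\<lambda>x::'a. \<Prod>i\<in>Basis. G i (x \<bullet> i))"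
      by blast
    have comp: "((\<lambda>x. G i (x \<bullet> i)) has_derivative (\<lambda>v. deriv (G i) (x \<bullet> i) * (v \<bullet> i))) (at x)"
      if "i \<in> Basis" for i and x :: 'a
    proof -
      have "(G i has_derivative (*) (deriv (G i) (x \<bullet> i))) (at (x \<bullet> i))"
        using csm_DERIV[of "G i"] G that by (simp add: has_field_derivative_def)
      from has_derivative_compose[OF has_derivative_inner_left[OF has_derivative_ident] this]
      show ?thesis by (simp add: o_def)
    qed
    have D: "(f has_derivative (\<lambda>v. \<Sum>i\<in>Basis. deriv (G i) (x \<bullet> i) * (v \<bullet> i) * (\<Prod>j\<in>Basis - {i}. G j (x \<bullet> j)))) (at x)" for x
      unfolding f by (rule has_derivative_prod) (rule comp)
    have fd: "frechet_derivative f (at x) b = (\<Prod>j\<in>Basis. (G(b := deriv (G b))) j (x \<bullet> j))"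
      if b: "b \<in> Basis" for x b
    proof -
      have "frechet_derivative f (at x) b = (\<Sum>i\<in>Basis. deriv (G i) (x \<bullet> i) * (b \<bullet> i) * (\<Prod>j\<in>Basis - {i}. G j (x \<bullet> j)))"
        unfolding frechet_derivative_at[OF D[of x], symmetric] by simp
      also have "\<dots> = deriv (G b) (x \<bullet> b) * (\<Prod>j\<in>Basis - {b}. G j (x \<bullet> j))"
        using b by (subst sum.remove[of _ b]) (auto simp: inner_Basis intro!: sum.neutral split: if_splits)
      also have "\<dots> = (\<Prod>j\<in>Basis. (G(b := deriv (G b))) j (x \<bullet> j))"
        using b by (simp add: prod.remove[of Basis b])
      finally show ?thesis .
    qed
    have "\<forall>b\<in>Basis. \<exists>G'. (\<forall>i\<in>Basis. csm (G' i)) \<and>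
            (\<lambda>x. frechet_derivative f (at x) b) = (\<lambda>x::'a. \<Prod>i\<in>Basis. G' i (x \<bullet> i))"
    proof
      fix b :: 'a assume b: "b \<in> Basis"
      show "\<exists>G'. (\<forall>i\<in>Basis. csm (G' i)) \<and>
            (\<lambda>x. frechet_derivative f (at x) b) = (\<lambda>x::'a. \<Prod>i\<in>Basis. G' i (x \<bullet> i))"
        by (rule exI[of _ "G(b := deriv (G b))"]) (use G b fd csm_deriv in auto)
    qed
    then show ?case using D differentiableI by blast
  qed
  then show ?thesis using assms by blast
qed

definition chi :: "nat \<Rightarrow> real \<Rightarrow> real \<Rightarrow> real \<Rightarrow> real" where
  "chi n c d y = EP 1 (real (Suc n) * (y - c)) * EP 1 (real (Suc n) * (d - y))"

lemma csm_chi: "csm (chi n c d)"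
proof -
  have 1: "csm (\<lambda>y. 1 * EP 1 (real (Suc n) * y + (- real (Suc n) * c)))"
    by (rule csm_affine[OF csm_EP])
  have 2: "csm (\<lambda>y. 1 * EP 1 ((- real (Suc n)) * y + (real (Suc n) * d)))"
    by (rule csm_affine[OF csm_EP])
  have "chi n c d = (\<lambda>y. (1 * EP 1 (real (Suc n) * y + (- real (Suc n) * c))) *
      (1 * EP 1 ((- real (Suc n)) * y + (real (Suc n) * d))))"
    by (auto simp: chi_def fun_eq_iff algebra_simps)
  then show ?thesis using csm_mult[OF 1 2] by simp
qed

lemma EP1_bounds: "0 \<le> EP 1 y" "EP 1 y \<le> 1"
  by (auto simp: EP_def)

lemma chi_bounds: "0 \<le> chi n c d y" "chi n c d y \<le> 1"
  using EP1_bounds by (auto simp: chi_def intro: mult_le_one)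

lemma chi_zero: "y \<le> c \<or> d \<le> y \<Longrightarrow> chi n c d y = 0"
  by (auto simp: chi_def EP_def zero_less_mult_iff)

lemma EP1_lim: assumes "t > 0" shows "(\<lambda>n. EP 1 (real (Suc n) * t)) \<longlonglongrightarrow> 1"
proof -
  have "(\<lambda>n. (1/t) * inverse (real (Suc n))) \<longlonglongrightarrow> (1/t) * 0"
    by (intro tendsto_mult tendsto_const LIMSEQ_inverse_real_of_nat)
  then have "(\<lambda>n. exp (- ((1/t) * inverse (real (Suc n))))) \<longlonglongrightarrow> exp (- ((1/t) * 0))"
    by (intro tendsto_exp tendsto_minus)
  moreover have "EP 1 (real (Suc n) * t) = exp (- ((1/t) * inverse (real (Suc n))))" for n
    using assms by (simp add: EP_def divide_inverse mult.commute)
  ultimately show ?thesis by simp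
qed

lemma chi_lim: "(\<lambda>n. chi n c d y) \<longlonglongrightarrow> (if c < y \<and> y < d then 1 else 0)"
proof (cases "c < y \<and> y < d")
  case True
  have "(\<lambda>n. chi n c d y) \<longlonglongrightarrow> 1 * 1"
    unfolding chi_def using True by (intro tendsto_mult EP1_lim) auto
  then show ?thesis using True by simp
next
  case False
  then show ?thesis using chi_zero[of y c d] by auto
qed

definition Phi :: "nat \<Rightarrow> 'a::euclidean_space \<Rightarrow> real \<Rightarrow> 'a \<Rightarrow> real" where
  "Phi n a r x = (\<Prod>i\<in>Basis. chi n (a \<bullet> i) (a \<bullet> i + r) (x \<bullet> i))"

lemma Phi_smooth: "smooth (Phi n a r)"
  unfolding Phi_def[abs_def] by (rule smooth_prod[of "\<lambda>i. chi n (a \<bullet> i) (a \<bullet> i + r)"]) (simp add: csm_chi)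

lemma Phi_zero: "x \<notin> cbox a (a + r *\<^sub>R One) \<Longrightarrow> Phi n a r x = 0"
proof -
  assume "x \<notin> cbox a (a + r *\<^sub>R One)"
  then obtain i where i: "i \<in> Basis" "x \<bullet> i < a \<bullet> i \<or> a \<bullet> i + r < x \<bullet> i"
    by (auto simp: mem_box inner_simps not_le)
  then have "chi n (a \<bullet> i) (a \<bullet> i + r) (x \<bullet> i) = 0" by (intro chi_zero) auto
  then show ?thesis unfolding Phi_def using i(1) by (intro prod_zero) auto
qed

lemma Phi_test: "test_function (Phi n a r)"
  unfolding test_function_def compact_support_def
  using Phi_smooth Phi_zero compact_cbox by metis

lemma Phi_bounds: "0 \<le> Phi n a r x" "Phi n a r x \<le> 1"
  unfolding Phi_def using chi_bounds by (auto intro!: prod_nonneg prod_le_1)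

lemma Phi_lim: "(\<lambda>n. Phi n a r x) \<longlonglongrightarrow> indicator (box a (a + r *\<^sub>R One)) x"
proof -
  have "(\<lambda>n. Phi n a r x) \<longlonglongrightarrow> (\<Prod>i\<in>Basis. (if a \<bullet> i < x \<bullet> i \<and> x \<bullet> i < a \<bullet> i + r then 1 else 0))"
    unfolding Phi_def by (intro tendsto_prod chi_lim)
  also have "(\<Prod>i\<in>Basis. (if a \<bullet> i < x \<bullet> i \<and> x \<bullet> i < a \<bullet> i + r then 1 else 0)) = (indicator (box a (a + r *\<^sub>R One)) x :: real)"
    by (simp add: mem_box inner_simps indicator_def prod_zero_iff)
  finally show ?thesis .
qed

lemma smooth_differentiable: "smooth f \<Longrightarrow> f differentiable (at x)"
  by (erule smooth.cases) auto

lemma smooth_continuous: "smooth f \<Longrightarrow> continuous_on UNIV f"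
  by (meson differentiable_imp_continuous_within continuous_at_imp_continuous_on smooth_differentiable)

lemma cont_meas: "continuous_on UNIV f \<Longrightarrow> (f::'a::euclidean_space \<Rightarrow> real) \<in> borel_measurable lebesgue"
  using continuous_imp_measurable_on_sets_lebesgue[of UNIV f] by (simp add: lebesgue_on_UNIV_eq)

lemma FL_cube:
  fixes h :: "'a::euclidean_space \<Rightarrow> real"
  assumes int: "integrable lebesgue h0"
    and h0: "\<And>x. x \<in> box a b \<Longrightarrow> h0 x = h x"
    and zero: "\<And>\<phi> K. test_function \<phi> \<Longrightarrow> compact K \<Longrightarrow> K \<subseteq> box a b \<Longrightarrow>
       (\<And>x. x \<notin> K \<Longrightarrow> \<phi> x = 0) \<Longrightarrow> (\<integral>x. h x * \<phi> x \<partial>lebesgue) = 0"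
    and Q: "cbox y (y + r *\<^sub>R One) \<subseteq> box a b"
  shows "integral (cbox y (y + r *\<^sub>R One)) h0 = 0"
proof -
  let ?Q = "cbox y (y + r *\<^sub>R One)" and ?B = "box y (y + r *\<^sub>R One)"
  have meas: "h0 \<in> borel_measurable lebesgue" using int by auto
  have Phim: "Phi n y r \<in> borel_measurable lebesgue" for n
    using Phi_smooth smooth_continuous cont_meas by blast
  have lim: "(\<lambda>n. integral\<^sup>L lebesgue (\<lambda>x. h0 x * Phi n y r x)) \<longlonglongrightarrow> integral\<^sup>L lebesgue (\<lambda>x. h0 x * indicator ?B x)"
  proof (rule integral_dominated_convergence[where w="\<lambda>x. norm (h0 x)"])
    have "integrable lebesgue (\<lambda>x. indicator ?B x * h0 x)"
      by (rule integrable_mult_indicator[OF _ int, simplified]) auto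
    then show "(\<lambda>x. h0 x * indicator ?B x) \<in> borel_measurable lebesgue"
      by (simp add: mult.commute)
    show "(\<lambda>x. h0 x * Phi n y r x) \<in> borel_measurable lebesgue" for n using meas Phim by (rule borel_measurable_times)
    show "integrable lebesgue (\<lambda>x. norm (h0 x))" using int by auto
    show "AE x in lebesgue. (\<lambda>n. h0 x * Phi n y r x) \<longlonglongrightarrow> h0 x * indicator ?B x"
      by (intro AE_I2 tendsto_mult tendsto_const Phi_lim)
    show "AE x in lebesgue. norm (h0 x * Phi n y r x) \<le> norm (h0 x)" for n
    proof (intro AE_I2)
      fix x
      have "\<bar>h0 x\<bar> * \<bar>Phi n y r x\<bar> \<le> \<bar>h0 x\<bar> * 1"
        using Phi_bounds[of n y r x] by (intro mult_left_mono) auto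
      then show "norm (h0 x * Phi n y r x) \<le> norm (h0 x)" by (simp add: abs_mult)
    qed
  qed
  have "integral\<^sup>L lebesgue (\<lambda>x. h0 x * Phi n y r x) = 0" for n
  proof -
    have "integral\<^sup>L lebesgue (\<lambda>x. h0 x * Phi n y r x) = integral\<^sup>L lebesgue (\<lambda>x. h x * Phi n y r x)"
    proof (rule Bochner_Integration.integral_cong[OF refl])
      fix x show "h0 x * Phi n y r x = h x * Phi n y r x"
      proof (cases "x \<in> ?Q")
        case True then show ?thesis using h0 Q by auto
      next
        case False then show ?thesis using Phi_zero[of x y r n] by simp
      qed
    qed
    also have "\<dots> = 0"
      by (rule zero[OF Phi_test compact_cbox Q]) (rule Phi_zero)
    finally show ?thesis .
  qed
  with lim have "(\<lambda>n. 0) \<longlonglongrightarrow> integral\<^sup>L lebesgue (\<lambda>x. h0 x * indicator ?B x)"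
    by simp
  then have "integral\<^sup>L lebesgue (\<lambda>x. h0 x * indicator ?B x) = 0"
    using LIMSEQ_unique tendsto_const by metis
  moreover have si: "set_integrable lebesgue ?B h0"
    unfolding set_integrable_def by (rule integrable_mult_indicator[OF _ int]) auto
  ultimately have "integral ?B h0 = 0"
  proof -
    assume z: "integral\<^sup>L lebesgue (\<lambda>x. h0 x * indicator ?B x) = 0"
    have "integral ?B h0 = (LINT x:?B|lebesgue. h0 x)" using set_lebesgue_integral_eq_integral(2)[OF si] by simp
    also have "\<dots> = integral\<^sup>L lebesgue (\<lambda>x. h0 x * indicator ?B x)"
      unfolding set_lebesgue_integral_def by (simp add: mult.commute)
    finally show ?thesis using z by simp
  qed
  then show ?thesis by (simp only: integral_open_interval)
qed

lemma FL:
  fixes h :: "'a::euclidean_space \<Rightarrow> real"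
  assumes si: "set_integrable lebesgue (cbox a b) h"
    and zero: "\<And>\<phi> K. test_function \<phi> \<Longrightarrow> compact K \<Longrightarrow> K \<subseteq> box a b \<Longrightarrow>
       (\<And>x. x \<notin> K \<Longrightarrow> \<phi> x = 0) \<Longrightarrow> (\<integral>x. h x * \<phi> x \<partial>lebesgue) = 0"
  shows "AE x in lebesgue. x \<in> box a b \<longrightarrow> h x = 0"
proof -
  define h0 where "h0 x = indicator (cbox a b) x * h x" for x
  have int: "integrable lebesgue h0"
    using si unfolding set_integrable_def h0_def[abs_def] by simp
  have hh: "x \<in> box a b \<Longrightarrow> h0 x = h x" for x
    using box_subset_cbox[of a b] by (auto simp: h0_def)
  have cube: "integral (cbox y (y + r *\<^sub>R One)) h0 = 0" if "cbox y (y + r *\<^sub>R One) \<subseteq> box a b" for y r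
    by (rule FL_cube[OF int hh zero that]) auto
  have intc: "h0 integrable_on cbox c d" for c d
  proof -
    have "set_integrable lebesgue (cbox c d) h0"
      unfolding set_integrable_def by (rule integrable_mult_indicator[OF _ int]) auto
    then show ?thesis by (rule set_lebesgue_integral_eq_integral(1))
  qed
  obtain N where N: "negligible N"
    and P: "\<And>x e. \<lbrakk>x \<notin> N; 0 < e\<rbrakk> \<Longrightarrow>
               \<exists>d>0. \<forall>h. 0 < h \<and> h < d \<longrightarrow>
                 norm(integral (cbox x (x + h *\<^sub>R One)) h0 /\<^sub>R h ^ DIM('a) - h0 x) < e"
    using integrable_ccontinuous_explicit[of h0] intc by blast
  have main: "h x = 0" if x: "x \<in> box a b" "x \<notin> N" for x
  proof -
    define d0 where "d0 = Min ((\<lambda>i. b \<bullet> i - x \<bullet> i) ` Basis)"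
    have d0: "d0 > 0"
      unfolding d0_def using x(1) by (subst Min_gr_iff) (auto simp: mem_box)
    have sub: "cbox x (x + \<rho> *\<^sub>R One) \<subseteq> box a b" if "0 < \<rho>" "\<rho> < d0" for \<rho>
    proof
      fix z assume z: "z \<in> cbox x (x + \<rho> *\<^sub>R One)"
      show "z \<in> box a b"
        unfolding mem_box
      proof
        fix i :: 'a assume i: "i \<in> Basis"
        have "d0 \<le> b \<bullet> i - x \<bullet> i" unfolding d0_def using i by (intro Min_le) auto
        moreover have "x \<bullet> i \<le> z \<bullet> i" "z \<bullet> i \<le> x \<bullet> i + \<rho>"
          using z i by (auto simp: mem_box inner_simps)
        moreover have "a \<bullet> i < x \<bullet> i" using x(1) i by (auto simp: mem_box)
        ultimately show "a \<bullet> i < z \<bullet> i \<and> z \<bullet> i < b \<bullet> i" using that by linarith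
      qed
    qed
    have "\<bar>h0 x\<bar> < e" if e: "e > 0" for e
    proof -
      obtain d where d: "d > 0" and dP: "\<forall>h. 0 < h \<and> h < d \<longrightarrow>
                 norm(integral (cbox x (x + h *\<^sub>R One)) h0 /\<^sub>R h ^ DIM('a) - h0 x) < e"
        using P[OF x(2) e] by blast
      define \<rho> where "\<rho> = min d d0 / 2"
      have \<rho>: "0 < \<rho>" "\<rho> < d" "\<rho> < d0" using d d0 by (auto simp: \<rho>_def)
      have "integral (cbox x (x + \<rho> *\<^sub>R One)) h0 = 0"
        using cube sub[OF \<rho>(1,3)] by blast
      with dP \<rho> show ?thesis by force
    qed
    then have "h0 x = 0"
      by (metis zero_less_abs_iff less_irrefl)
    then show ?thesis using hh x(1) by simp
  qed
  have "AE x in lebesgue. x \<notin> N"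
    using N by (intro AE_not_in) (simp add: negligible_iff_null_sets)
  then show ?thesis
    by (rule AE_mp) (use main in auto)
qed

lemma test_deriv_smooth:
  "test_function \<phi> \<Longrightarrow> e \<in> Basis \<Longrightarrow> smooth (\<lambda>x. frechet_derivative \<phi> (at x) e)"
  unfolding test_function_def by (auto elim: smooth.cases)

lemma deriv_zero_outside:
  fixes \<phi> :: "'a::euclidean_space \<Rightarrow> real"
  assumes "closed K" "\<And>y. y \<notin> K \<Longrightarrow> \<phi> y = 0" "x \<notin> K"
  shows "frechet_derivative \<phi> (at x) = (\<lambda>v. 0)"
proof -
  have "((\<lambda>_. 0::real) has_derivative (\<lambda>v. 0)) (at x)" by (rule has_derivative_const)
  then have "(\<phi> has_derivative (\<lambda>v. 0)) (at x)"
    by (rule has_derivative_transform_within_open[OF _ open_Compl[OF assms(1)]]) (use assms in auto)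
  then show ?thesis using frechet_derivative_at by metis
qed

lemma cont_cs_bounded:
  fixes \<phi> :: "'a::euclidean_space \<Rightarrow> real"
  assumes "continuous_on UNIV \<phi>" "compact K" "\<And>x. x \<notin> K \<Longrightarrow> \<phi> x = 0"
  obtains B where "B \<ge> 0" "\<And>x. \<bar>\<phi> x\<bar> \<le> B"
proof -
  have "compact (\<phi> ` K)"
    using assms by (intro compact_continuous_image) (auto intro: continuous_on_subset)
  then obtain B where B: "\<And>y. y \<in> \<phi> ` K \<Longrightarrow> norm y \<le> B"
    by (meson bounded_iff compact_imp_bounded)
  have "\<bar>\<phi> x\<bar> \<le> max B 0" for x
    using B[of "\<phi> x"] assms(3)[of x] by (cases "x \<in> K") auto
  then show ?thesis using that[of "max B 0"] by auto
qed

lemma integrable_loc_times: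
  fixes G \<phi> :: "'a::euclidean_space \<Rightarrow> real"
  assumes G: "set_integrable lebesgue K G" and cont: "continuous_on UNIV \<phi>"
    and K: "compact K" and z: "\<And>x. x \<notin> K \<Longrightarrow> \<phi> x = 0"
  shows "integrable lebesgue (\<lambda>x. G x * \<phi> x)"
proof -
  obtain B where B: "B \<ge> 0" "\<And>x. \<bar>\<phi> x\<bar> \<le> B" using cont_cs_bounded[OF cont K z] by blast
  have iG: "integrable lebesgue (\<lambda>x. indicator K x * G x)" using G by (simp add: set_integrable_def)
  have eq: "(\<lambda>x. G x * \<phi> x) = (\<lambda>x. (indicator K x * G x) * \<phi> x)"
    using z by (auto simp: indicator_def fun_eq_iff)
  show ?thesis unfolding eq
  proof (rule Bochner_Integration.integrable_bound[where f="\<lambda>x. B * (indicator K x * G x)"])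
    show "integrable lebesgue (\<lambda>x. B * (indicator K x * G x))" using iG by simp
    show "(\<lambda>x. indicator K x * G x * \<phi> x) \<in> borel_measurable lebesgue"
      by (rule borel_measurable_times[OF borel_measurable_integrable[OF iG] cont_meas[OF cont]])
    show "AE x in lebesgue. norm (indicator K x * G x * \<phi> x) \<le> norm (B * (indicator K x * G x))"
    proof (intro AE_I2)
      fix x
      have "\<bar>indicator K x * G x\<bar> * \<bar>\<phi> x\<bar> \<le> \<bar>indicator K x * G x\<bar> * B"
        using B by (intro mult_left_mono) auto
      then show "norm (indicator K x * G x * \<phi> x) \<le> norm (B * (indicator K x * G x))"
        using B by (simp add: abs_mult mult.commute)
    qed
  qed
qed

lemma wg_unique_box:
  fixes v1 v2 :: "'a::euclidean_space \<Rightarrow> real"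
  assumes w1: "weak_gradient v1 g1" and w2: "weak_gradient v2 g2"
    and eq: "AE x in lebesgue. x \<in> box a b \<longrightarrow> v1 x = v2 x"
  shows "AE x in lebesgue. x \<in> box a b \<longrightarrow> g1 x = g2 x"
proof -
  have comp0: "AE x in lebesgue. x \<in> box a b \<longrightarrow> g1 x \<bullet> e - g2 x \<bullet> e = 0" if e: "e \<in> Basis" for e
  proof (rule FL)
    have "set_integrable lebesgue (cbox a b) (\<lambda>x. g1 x \<bullet> e)"
      using w1 e unfolding weak_gradient_def locally_integrable_def by auto
    moreover have "set_integrable lebesgue (cbox a b) (\<lambda>x. g2 x \<bullet> e)"
      using w2 e unfolding weak_gradient_def locally_integrable_def by auto
    ultimately show "set_integrable lebesgue (cbox a b) (\<lambda>x. g1 x \<bullet> e - g2 x \<bullet> e)"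
      by (rule set_integral_diff(1))
  next
    fix \<phi> :: "'a \<Rightarrow> real" and K
    assume \<phi>: "test_function \<phi>" and K: "compact K" "K \<subseteq> box a b" and z: "\<And>x. x \<notin> K \<Longrightarrow> \<phi> x = 0"
    have cont: "continuous_on UNIV \<phi>" using \<phi> smooth_continuous test_function_def by blast
    have dcont: "continuous_on UNIV (\<lambda>x. frechet_derivative \<phi> (at x) e)"
      using test_deriv_smooth[OF \<phi> e] smooth_continuous by blast
    have dz: "frechet_derivative \<phi> (at x) e = 0" if "x \<notin> K" for x
      using deriv_zero_outside[OF compact_imp_closed[OF K(1)] z that] by simp
    have i1: "integrable lebesgue (\<lambda>x. (g1 x \<bullet> e) * \<phi> x)"
      using w1 e K(1) unfolding weak_gradient_def locally_integrable_def
      by (intro integrable_loc_times[OF _ cont K(1) z]) auto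
    have i2: "integrable lebesgue (\<lambda>x. (g2 x \<bullet> e) * \<phi> x)"
      using w2 e K(1) unfolding weak_gradient_def locally_integrable_def
      by (intro integrable_loc_times[OF _ cont K(1) z]) auto
    have s1: "set_integrable lebesgue K v1" and s2: "set_integrable lebesgue K v2"
      using w1 w2 K(1) unfolding weak_gradient_def locally_integrable_def by auto
    have m1: "(\<lambda>x. indicator K x * v1 x * frechet_derivative \<phi> (at x) e) \<in> borel_measurable lebesgue"
      using s1 unfolding set_integrable_def
      by (intro borel_measurable_times[OF borel_measurable_integrable cont_meas[OF dcont]]) simp
    have m2: "(\<lambda>x. indicator K x * v2 x * frechet_derivative \<phi> (at x) e) \<in> borel_measurable lebesgue"
      using s2 unfolding set_integrable_def
      by (intro borel_measurable_times[OF borel_measurable_integrable cont_meas[OF dcont]]) simp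
    have r1: "(\<lambda>x. v1 x * frechet_derivative \<phi> (at x) e) = (\<lambda>x. indicator K x * v1 x * frechet_derivative \<phi> (at x) e)"
      using dz by (auto simp: indicator_def fun_eq_iff)
    have r2: "(\<lambda>x. v2 x * frechet_derivative \<phi> (at x) e) = (\<lambda>x. indicator K x * v2 x * frechet_derivative \<phi> (at x) e)"
      using dz by (auto simp: indicator_def fun_eq_iff)
    have "(\<integral>x. v1 x * frechet_derivative \<phi> (at x) e \<partial>lebesgue) = (\<integral>x. v2 x * frechet_derivative \<phi> (at x) e \<partial>lebesgue)"
      unfolding r1 r2
    proof (rule integral_cong_AE[OF m1 m2])
      show "AE x in lebesgue. indicator K x * v1 x * frechet_derivative \<phi> (at x) e = indicator K x * v2 x * frechet_derivative \<phi> (at x) e"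
        using eq by eventually_elim (use K(2) in \<open>auto simp: indicator_def\<close>)
    qed
    then have "(\<integral>x. (g1 x \<bullet> e) * \<phi> x \<partial>lebesgue) = (\<integral>x. (g2 x \<bullet> e) * \<phi> x \<partial>lebesgue)"
      using w1 w2 \<phi> e unfolding weak_gradient_def by auto
    then show "(\<integral>x. (g1 x \<bullet> e - g2 x \<bullet> e) * \<phi> x \<partial>lebesgue) = 0"
      using i1 i2 by (simp add: left_diff_distrib)
  qed
  have comp: "AE x in lebesgue. x \<in> box a b \<longrightarrow> g1 x \<bullet> e = g2 x \<bullet> e" if e: "e \<in> Basis" for e
    using comp0[OF e] by eventually_elim simp
  have "AE x in lebesgue. \<forall>e\<in>Basis. x \<in> box a b \<longrightarrow> g1 x \<bullet> e = g2 x \<bullet> e"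
    by (rule AE_finite_allI[OF finite_Basis]) (rule comp)
  then show ?thesis
    by eventually_elim (auto intro: euclidean_eqI)
qed

lemma BMCS_lborel:
  fixes f :: "'a::euclidean_space \<Rightarrow> real"
  assumes m: "f \<in> borel_measurable borel" and B: "\<And>x. \<bar>f x\<bar> \<le> B"
    and K: "compact K" and z: "\<And>x. x \<notin> K \<Longrightarrow> f x = 0"
  shows "integrable lborel f"
proof (rule Bochner_Integration.integrable_bound[where f="\<lambda>x. B * indicator K x"])
  have "K \<in> sets lborel" using K by (simp add: compact_imp_closed)
  moreover have "emeasure lborel K < \<infinity>" using emeasure_bounded_finite[OF compact_imp_bounded[OF K]] .
  ultimately show "integrable lborel (\<lambda>x. B * indicator K x)" by simp
  show "f \<in> borel_measurable lborel" using m by simp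
  show "AE x in lborel. norm (f x) \<le> norm (B * indicator K x)"
  proof (intro AE_I2)
    fix x show "norm (f x) \<le> norm (B * indicator K x)"
      using B[of x] z[of x] by (cases "x \<in> K") (auto simp: indicator_def)
  qed
qed

lemma CCS_lborel:
  fixes f :: "'a::euclidean_space \<Rightarrow> real"
  assumes c: "continuous_on UNIV f" and K: "compact K" and z: "\<And>x. x \<notin> K \<Longrightarrow> f x = 0"
  shows "integrable lborel f"
proof -
  obtain B where "\<And>x. \<bar>f x\<bar> \<le> B" using cont_cs_bounded[OF c K z] by blast
  then show ?thesis using BMCS_lborel[OF borel_measurable_continuous_onI[OF c] _ K z] by blast
qed

lemma IBP0:
  fixes F :: "'a::euclidean_space \<Rightarrow> real" and e :: 'a
  assumes D: "\<And>x. (F has_derivative F' x) (at x)"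
    and cD: "continuous_on UNIV (\<lambda>x. F' x e)"
    and K: "compact K" and z: "\<And>x. x \<notin> K \<Longrightarrow> F x = 0"
    and e: "norm e = 1"
  shows "integral\<^sup>L lborel (\<lambda>x. F' x e) = 0"
proof -
  have cF: "continuous_on UNIV F"
    using D by (meson continuous_at_imp_continuous_on has_derivative_continuous)
  have Fz: "F' x e = 0" if "x \<notin> K" for x
  proof -
    have "frechet_derivative F (at x) = (\<lambda>v. 0)"
      by (rule deriv_zero_outside[OF compact_imp_closed[OF K] z that])
    moreover have "F' x = frechet_derivative F (at x)" using frechet_derivative_at[OF D[of x]] .
    ultimately show ?thesis by simp
  qed
  obtain B where B0: "B \<ge> 0" and B: "\<And>x. \<bar>F' x e\<bar> \<le> B" using cont_cs_bounded[OF cD K Fz] by blast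
  obtain R where R: "R > 0" "\<And>x. x \<in> K \<Longrightarrow> norm x \<le> R"
    using compact_imp_bounded[OF K] unfolding bounded_pos by blast
  define K2 where "K2 = cball (0::'a) (R + 1)"
  define s where "s n = 1 / real (Suc n)" for n
  have s: "0 < s n" "s n \<le> 1" for n by (auto simp: s_def)
  define Q where "Q n x = (F (x + s n *\<^sub>R e) - F x) / s n" for n x
  have lin: "F' x (t *\<^sub>R e) = t * F' x e" for x t
    using has_derivative_bounded_linear[OF D[of x]] by (simp add: bounded_linear.axioms(1) linear_scale)
  have gD: "((\<lambda>t. F (x + t *\<^sub>R e)) has_real_derivative F' (x + t *\<^sub>R e) e) (at t)" for x t
  proof -
    have "((\<lambda>t. x + t *\<^sub>R e) has_derivative (\<lambda>h. h *\<^sub>R e)) (at t)"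
      by (auto intro!: derivative_eq_intros)
    from has_derivative_compose[OF this D[of "x + t *\<^sub>R e"]]
    have "((\<lambda>t. F (x + t *\<^sub>R e)) has_derivative (\<lambda>h. F' (x + t *\<^sub>R e) (h *\<^sub>R e))) (at t)"
      by (simp add: o_def)
    then have "((\<lambda>t. F (x + t *\<^sub>R e)) has_derivative (\<lambda>h. F' (x + t *\<^sub>R e) e * h)) (at t)"
      unfolding lin by (simp add: mult.commute)
    then show ?thesis unfolding has_field_derivative_def .
  qed
  have intF: "integrable lborel F" by (rule CCS_lborel[OF cF K z])
  have trans: "integral\<^sup>L lborel (\<lambda>x. F (x + c)) = integral\<^sup>L lborel F" for c
  proof -
    have "integral\<^sup>L lborel F = integral\<^sup>L (distr lborel borel ((+) c)) F"
      by (simp add: lborel_distr_plus)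
    also have "\<dots> = integral\<^sup>L lborel (\<lambda>x. F (c + x))"
      by (rule integral_distr) (auto intro: borel_measurable_continuous_onI[OF cF])
    finally show ?thesis by (simp add: add.commute)
  qed
  have intT: "integrable lborel (\<lambda>x. F (x + c))" for c
  proof (rule CCS_lborel[where K="(\<lambda>x. x - c) ` K"])
    show "continuous_on UNIV (\<lambda>x. F (x + c))"
      by (rule continuous_on_compose2[OF cF]) (auto intro!: continuous_intros)
    show "compact ((\<lambda>x. x - c) ` K)" by (rule compact_translation_subtract[OF K])
    show "F (x + c) = 0" if "x \<notin> (\<lambda>x. x - c) ` K" for x
      using that by (intro z) (metis add_diff_cancel image_eqI)
  qed
  have intQ: "integral\<^sup>L lborel (Q n) = 0" for n
  proof -
    have "integral\<^sup>L lborel (Q n) = (integral\<^sup>L lborel (\<lambda>x. F (x + s n *\<^sub>R e)) - integral\<^sup>L lborel F) / s n"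
      unfolding Q_def[abs_def] using intT intF by simp
    then show ?thesis using trans by simp
  qed
  have lim: "(\<lambda>n. integral\<^sup>L lborel (Q n)) \<longlonglongrightarrow> integral\<^sup>L lborel (\<lambda>x. F' x e)"
  proof (rule integral_dominated_convergence[where w="\<lambda>x. B * indicator K2 x"])
    show "(\<lambda>x. F' x e) \<in> borel_measurable lborel"
      using borel_measurable_continuous_onI[OF cD] by simp
    show "Q n \<in> borel_measurable lborel" for n
    proof -
      have "continuous_on UNIV (Q n)" unfolding Q_def[abs_def]
        by (intro continuous_intros continuous_on_compose2[OF cF]) (auto intro!: continuous_intros simp: s_def)
      then show ?thesis using borel_measurable_continuous_onI by simp
    qed
    have "K2 \<in> sets lborel" by (simp add: K2_def)
    moreover have "emeasure lborel K2 < \<infinity>" unfolding K2_def by (rule emeasure_bounded_finite) simp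
    ultimately show "integrable lborel (\<lambda>x. B * indicator K2 x)" by simp
    show "AE x in lborel. (\<lambda>n. Q n x) \<longlonglongrightarrow> F' x e"
    proof (intro AE_I2)
      fix x
      have "((\<lambda>y. (F (x + y *\<^sub>R e) - F (x + 0 *\<^sub>R e)) / (y - 0)) \<longlongrightarrow> F' (x + 0 *\<^sub>R e) e) (at 0)"
        using gD[of x 0] by (simp only: has_field_derivative_iff)
      then have l0: "((\<lambda>y. (F (x + y *\<^sub>R e) - F x) / y) \<longlongrightarrow> F' x e) (at 0)" by simp
      have "filterlim s (at 0) sequentially"
        unfolding filterlim_at
      proof
        have "(\<lambda>n. inverse (real (Suc n))) \<longlonglongrightarrow> 0" by (rule LIMSEQ_inverse_real_of_nat)
        moreover have "s = (\<lambda>n. inverse (real (Suc n)))" by (simp add: s_def fun_eq_iff inverse_eq_divide)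
        ultimately show "s \<longlonglongrightarrow> 0" by simp
        show "\<forall>\<^sub>F n in sequentially. s n \<in> UNIV \<and> s n \<noteq> 0" using s by (simp add: less_imp_neq[symmetric])
      qed
      from filterlim_compose[OF l0 this] show "(\<lambda>n. Q n x) \<longlonglongrightarrow> F' x e"
        by (simp add: Q_def o_def)
    qed
    show "AE x in lborel. norm (Q n x) \<le> B * indicator K2 x" for n
    proof (intro AE_I2)
      fix x
      have "\<bar>F (x + s n *\<^sub>R e) - F x\<bar> \<le> s n * B"
      proof -
        have "\<exists>t\<in>{0<..<s n}. F (x + s n *\<^sub>R e) - F (x + 0 *\<^sub>R e) = F' (x + t *\<^sub>R e) e * (s n - 0)"
        proof (rule mvt_simple[of 0 "s n" "\<lambda>t. F (x + t *\<^sub>R e)" "\<lambda>t h. F' (x + t *\<^sub>R e) e * h"])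
          show "0 < s n" by (rule s)
          fix t :: real
          show "((\<lambda>t. F (x + t *\<^sub>R e)) has_derivative (\<lambda>h. F' (x + t *\<^sub>R e) e * h)) (at t within {0..s n})"
            using gD[of x t] unfolding has_field_derivative_def by (rule has_derivative_at_withinI)
        qed
        then obtain t where "F (x + s n *\<^sub>R e) - F x = F' (x + t *\<^sub>R e) e * s n" by auto
        then have "\<bar>F (x + s n *\<^sub>R e) - F x\<bar> = \<bar>F' (x + t *\<^sub>R e) e\<bar> * s n"
          using s[of n] by (simp add: abs_mult)
        also have "\<dots> \<le> B * s n" using B s[of n] by (intro mult_right_mono) auto
        finally show ?thesis by (simp add: mult.commute)
      qed
      then have QB: "\<bar>Q n x\<bar> \<le> B" using s[of n] by (simp add: Q_def divide_le_eq abs_div mult.commute)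
      show "norm (Q n x) \<le> B * indicator K2 x"
      proof (cases "x \<in> K2")
        case True then show ?thesis using QB by simp
      next
        case False
        then have "norm x > R + 1" by (simp add: K2_def)
        moreover have "norm (x + s n *\<^sub>R e) \<ge> norm x - s n" 
          using norm_triangle_ineq2[of x "- s n *\<^sub>R e"] e s[of n] by simp
        ultimately have "norm (x + s n *\<^sub>R e) > R" "norm x > R" using s[of n] by linarith+
        then have "x \<notin> K" "x + s n *\<^sub>R e \<notin> K" using R(2) by force+
        then show ?thesis using z B0 by (simp add: Q_def)
      qed
    qed
  qed
  then have "(\<lambda>n. 0) \<longlonglongrightarrow> integral\<^sup>L lborel (\<lambda>x. F' x e)" using intQ by simp
  then show ?thesis using LIMSEQ_unique tendsto_const by metis
qed

lemma CCS_leb: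
  fixes f :: "'a::euclidean_space \<Rightarrow> real"
  assumes c: "continuous_on UNIV f" and K: "compact K" and z: "\<And>x. x \<notin> K \<Longrightarrow> f x = 0"
  shows "integrable lebesgue f"
  using CCS_lborel[OF c K z] integrable_completion[of f lborel] borel_measurable_continuous_onI[OF c]
  by simp

lemma int_LI:
  fixes f :: "'a::euclidean_space \<Rightarrow> real"
  assumes "integrable lebesgue f" shows "locally_integrable f"
  unfolding locally_integrable_def set_integrable_def
proof (intro allI impI)
  fix K :: "'a set" assume "compact K"
  then have "K \<in> sets lebesgue" using lmeasurable_compact fmeasurableD by blast
  then show "integrable lebesgue (\<lambda>x. indicator K x *\<^sub>R f x)"
    by (rule integrable_mult_indicator) (rule assms)
qed

lemma leb_eq_lborel:
  fixes f :: "'a::euclidean_space \<Rightarrow> real"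
  assumes "continuous_on UNIV f"
  shows "integral\<^sup>L lebesgue f = integral\<^sup>L lborel f"
  using integral_completion[of f lborel] borel_measurable_continuous_onI[OF assms] by simp

locale testf =
  fixes \<psi> :: "'a::euclidean_space \<Rightarrow> real"
  assumes tf: "test_function \<psi>"
begin

lemma cont: "continuous_on UNIV \<psi>"
  using tf smooth_continuous test_function_def by blast

lemma diff: "\<psi> differentiable (at x)"
  using tf smooth_differentiable test_function_def by blast

lemma has_d: "(\<psi> has_derivative frechet_derivative \<psi> (at x)) (at x)"
  using diff frechet_derivative_works by blast

lemma dcont: "e \<in> Basis \<Longrightarrow> continuous_on UNIV (\<lambda>x. frechet_derivative \<psi> (at x) e)"
  using test_deriv_smooth[OF tf] smooth_continuous by blast

definition "Ks = (SOME K. compact K \<and> (\<forall>x. x \<notin> K \<longrightarrow> \<psi> x = 0))"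

lemma Ks: "compact Ks" "\<And>x. x \<notin> Ks \<Longrightarrow> \<psi> x = 0"
proof -
  have "\<exists>K. compact K \<and> (\<forall>x. x \<notin> K \<longrightarrow> \<psi> x = 0)"
    using tf unfolding test_function_def compact_support_def by blast
  then have "compact Ks \<and> (\<forall>x. x \<notin> Ks \<longrightarrow> \<psi> x = 0)" unfolding Ks_def by (rule someI_ex)
  then show "compact Ks" "\<And>x. x \<notin> Ks \<Longrightarrow> \<psi> x = 0" by auto
qed

lemma dzero: "x \<notin> Ks \<Longrightarrow> frechet_derivative \<psi> (at x) e = 0"
  using deriv_zero_outside[OF compact_imp_closed[OF Ks(1)] Ks(2)] by simp

lemma bounded: obtains B where "B \<ge> 0" "\<And>x. \<bar>\<psi> x\<bar> \<le> B"
  using cont_cs_bounded[OF cont Ks] by blast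

lemma cgrad_inner: "b \<in> Basis \<Longrightarrow> cgrad \<psi> x \<bullet> b = frechet_derivative \<psi> (at x) b"
  unfolding cgrad_def inner_sum_left
  by (subst sum.remove[of _ b]) (auto simp: inner_Basis intro!: sum.neutral split: if_splits)

lemma cgrad_cont: "continuous_on UNIV (cgrad \<psi>)"
  unfolding cgrad_def[abs_def] by (intro continuous_intros continuous_on_scaleR dcont) auto

lemma cgrad_zero: "x \<notin> Ks \<Longrightarrow> cgrad \<psi> x = 0"
  unfolding cgrad_def using dzero by simp

end

lemma IBP:
  assumes \<psi>: "test_function \<psi>" and \<phi>: "test_function \<phi>" and e: "e \<in> Basis"
  shows "(\<integral>x. \<psi> x * frechet_derivative \<phi> (at x) e \<partial>lebesgue) =
         - (\<integral>x. frechet_derivative \<psi> (at x) e * \<phi> x \<partial>lebesgue)"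
proof -
  interpret P: testf \<psi> by standard (rule \<psi>)
  interpret F: testf \<phi> by standard (rule \<phi>)
  let ?A = "\<lambda>x. \<psi> x * frechet_derivative \<phi> (at x) e"
  let ?B = "\<lambda>x. frechet_derivative \<psi> (at x) e * \<phi> x"
  have cA: "continuous_on UNIV ?A" by (intro continuous_intros P.cont F.dcont e)
  have cB: "continuous_on UNIV ?B" by (intro continuous_intros F.cont P.dcont e)
  have zA: "?A x = 0" if "x \<notin> P.Ks" for x using P.Ks(2)[OF that] by simp
  have zB: "?B x = 0" if "x \<notin> P.Ks" for x using P.dzero[OF that] by simp
  have D: "((\<lambda>x. \<psi> x * \<phi> x) has_derivative
      (\<lambda>v. \<psi> x * frechet_derivative \<phi> (at x) v + frechet_derivative \<psi> (at x) v * \<phi> x)) (at x)" for x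
    by (rule has_derivative_mult[OF P.has_d F.has_d])
  have "integral\<^sup>L lborel (\<lambda>x. ?A x + ?B x) = 0"
  proof (rule IBP0[OF D])
    show "continuous_on UNIV (\<lambda>x. ?A x + ?B x)" by (intro continuous_intros cA cB)
    show "compact P.Ks" by (rule P.Ks)
    show "\<psi> x * \<phi> x = 0" if "x \<notin> P.Ks" for x using P.Ks(2)[OF that] by simp
    show "norm e = 1" using e by simp
  qed
  moreover have "integrable lborel ?A" by (rule CCS_lborel[OF cA P.Ks(1) zA])
  moreover have "integrable lborel ?B" by (rule CCS_lborel[OF cB P.Ks(1) zB])
  ultimately have "integral\<^sup>L lborel ?A = - integral\<^sup>L lborel ?B" by simp
  then show ?thesis using leb_eq_lborel[OF cA] leb_eq_lborel[OF cB] by simp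
qed

lemma test_weak_gradient:
  fixes \<psi> :: "'a::euclidean_space \<Rightarrow> real"
  assumes \<psi>: "test_function \<psi>"
  shows "weak_gradient \<psi> (cgrad \<psi>)"
proof -
  interpret P: testf \<psi> by standard (rule \<psi>)
  show ?thesis unfolding weak_gradient_def
  proof (intro conjI ballI allI impI)
    show "locally_integrable \<psi>" by (rule int_LI[OF CCS_leb[OF P.cont P.Ks]])
    fix b :: 'a assume b: "b \<in> Basis"
    show "locally_integrable (\<lambda>x. cgrad \<psi> x \<bullet> b)"
      unfolding P.cgrad_inner[OF b]
      by (rule int_LI[OF CCS_leb[OF P.dcont[OF b] P.Ks(1) P.dzero]])
  next
    fix \<phi> :: "'a \<Rightarrow> real" and b :: 'a assume \<phi>: "test_function \<phi>" and b: "b \<in> Basis"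
    show "(\<integral>x. \<psi> x * frechet_derivative \<phi> (at x) b \<partial>lebesgue) = - (\<integral>x. (cgrad \<psi> x \<bullet> b) * \<phi> x \<partial>lebesgue)"
      unfolding P.cgrad_inner[OF b] by (rule IBP[OF \<psi> \<phi> b])
  qed
qed

lemma weak_gradient_uminus:
  assumes "weak_gradient u g" shows "weak_gradient (\<lambda>x. - u x) (\<lambda>x. - g x)"
  using assms unfolding weak_gradient_def locally_integrable_def set_integrable_def
  by (auto simp: integral_minus_iff)

lemma LI_meas:
  fixes h :: "'a::euclidean_space \<Rightarrow> real"
  assumes "locally_integrable h" shows "h \<in> borel_measurable lebesgue"
proof (rule borel_measurable_LIMSEQ_real[where u="\<lambda>n x. indicator (cball 0 (real n)) x *\<^sub>R h x"])
  fix n :: nat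
  have "integrable lebesgue (\<lambda>x. indicator (cball 0 (real n)) x *\<^sub>R h x)"
    using assms unfolding locally_integrable_def set_integrable_def by auto
  then show "(\<lambda>x. indicator (cball 0 (real n)) x *\<^sub>R h x) \<in> borel_measurable lebesgue" by auto
next
  fix x :: 'a
  obtain N where N: "norm x \<le> real N" using real_arch_simple by blast
  have "eventually (\<lambda>n. indicator (cball 0 (real n)) x *\<^sub>R h x = h x) sequentially"
    unfolding eventually_sequentially
    by (rule exI[of _ N]) (use N in \<open>auto simp: indicator_def\<close>)
  then show "(\<lambda>n. indicator (cball 0 (real n)) x *\<^sub>R h x) \<longlonglongrightarrow> h x"
    by (rule tendsto_eventually)
qed

lemma wg_meas:
  assumes "weak_gradient v g" shows "g \<in> borel_measurable lebesgue"
proof (rule borel_measurable_euclidean_space[THEN iffD2], intro ballI)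
  fix i :: 'a assume i: "i \<in> Basis"
  have "locally_integrable (\<lambda>x. g x \<bullet> i)" using assms i unfolding weak_gradient_def by simp
  then show "(\<lambda>x. g x \<bullet> i) \<in> borel_measurable lebesgue" by (rule LI_meas)
qed

lemma wg_meas_fun:
  assumes "weak_gradient v g" shows "v \<in> borel_measurable lebesgue"
proof -
  have "locally_integrable v" using assms unfolding weak_gradient_def by simp
  then show ?thesis by (rule LI_meas)
qed

lemma wg_AE:
  fixes v v' :: "'a::euclidean_space \<Rightarrow> real"
  assumes w: "weak_gradient v g" and m': "v' \<in> borel_measurable lebesgue"
    and ae: "AE x in lebesgue. v x = v' x"
  shows "weak_gradient v' g"
proof -
  have m: "v \<in> borel_measurable lebesgue" by (rule wg_meas_fun[OF w])
  have li: "locally_integrable v'"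
    unfolding locally_integrable_def set_integrable_def
  proof (intro allI impI)
    fix K :: "'a set" assume "compact K"
    then have "integrable lebesgue (\<lambda>x. indicator K x *\<^sub>R v x)"
      using w unfolding weak_gradient_def locally_integrable_def set_integrable_def by auto
    moreover have "K \<in> sets lebesgue" using \<open>compact K\<close> lmeasurable_compact fmeasurableD by blast
    moreover note Ks = \<open>K \<in> sets lebesgue\<close>
    have "integrable lebesgue (\<lambda>x. indicator K x *\<^sub>R v x) = integrable lebesgue (\<lambda>x. indicator K x *\<^sub>R v' x)"
    proof (rule integrable_cong_AE)
      show "(\<lambda>x. indicator K x *\<^sub>R v x) \<in> borel_measurable lebesgue"
        by (intro borel_measurable_scaleR borel_measurable_indicator Ks m)
      show "(\<lambda>x. indicator K x *\<^sub>R v' x) \<in> borel_measurable lebesgue"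
        by (intro borel_measurable_scaleR borel_measurable_indicator Ks m')
      show "AE x in lebesgue. indicator K x *\<^sub>R v x = indicator K x *\<^sub>R v' x"
        using ae by eventually_elim simp
    qed
    ultimately show "integrable lebesgue (\<lambda>x. indicator K x *\<^sub>R v' x)" by simp
  qed
  show ?thesis unfolding weak_gradient_def
  proof (intro conjI li ballI allI impI)
    show "locally_integrable (\<lambda>x. g x \<bullet> b)" if "b \<in> Basis" for b
      using w that unfolding weak_gradient_def by blast
    fix \<phi> :: "'a \<Rightarrow> real" and b :: 'a assume \<phi>: "test_function \<phi>" and b: "b \<in> Basis"
    have dm: "(\<lambda>x. frechet_derivative \<phi> (at x) b) \<in> borel_measurable lebesgue"
      using test_deriv_smooth[OF \<phi> b] smooth_continuous cont_meas by blast
    have "(\<integral>x. v' x * frechet_derivative \<phi> (at x) b \<partial>lebesgue) = (\<integral>x. v x * frechet_derivative \<phi> (at x) b \<partial>lebesgue)"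
    proof (rule integral_cong_AE)
      show "(\<lambda>x. v' x * frechet_derivative \<phi> (at x) b) \<in> borel_measurable lebesgue"
        by (rule borel_measurable_times[OF m' dm])
      show "(\<lambda>x. v x * frechet_derivative \<phi> (at x) b) \<in> borel_measurable lebesgue"
        by (rule borel_measurable_times[OF m dm])
      show "AE x in lebesgue. v' x * frechet_derivative \<phi> (at x) b = v x * frechet_derivative \<phi> (at x) b"
        using ae by eventually_elim simp
    qed
    also have "\<dots> = - (\<integral>x. (g x \<bullet> b) * \<phi> x \<partial>lebesgue)"
      using w \<phi> b unfolding weak_gradient_def by blast
    finally show "(\<integral>x. v' x * frechet_derivative \<phi> (at x) b \<partial>lebesgue) = - (\<integral>x. (g x \<bullet> b) * \<phi> x \<partial>lebesgue)" .
  qed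
qed

lemma wg_unique:
  fixes v :: "'a::euclidean_space \<Rightarrow> real"
  assumes w1: "weak_gradient v g1" and w2: "weak_gradient v g2"
  shows "AE x in lebesgue. g1 x = g2 x"
proof -
  have "AE x in lebesgue. \<forall>n::nat. x \<in> box (- real n *\<^sub>R One) (real n *\<^sub>R One) \<longrightarrow> g1 x = g2 x"
    unfolding AE_all_countable
    by (intro allI wg_unique_box[OF w1 w2] AE_I2) (rule impI, rule refl)
  then show ?thesis
  proof eventually_elim
    fix x :: 'a assume H: "\<forall>n::nat. x \<in> box (- real n *\<^sub>R One) (real n *\<^sub>R One) \<longrightarrow> g1 x = g2 x"
    obtain N :: nat where N: "norm x < real N" using reals_Archimedean2 by blast
    have "x \<in> box (- real N *\<^sub>R One) (real N *\<^sub>R One)"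
      unfolding mem_box
    proof
      fix i :: 'a assume i: "i \<in> Basis"
      have "\<bar>x \<bullet> i\<bar> \<le> norm x" using Basis_le_norm[OF i] .
      then show "(- real N *\<^sub>R One) \<bullet> i < x \<bullet> i \<and> x \<bullet> i < (real N *\<^sub>R One) \<bullet> i"
        using N i by (auto simp: inner_simps)
    qed
    then show "g1 x = g2 x" using H by blast
  qed
qed

lemma wgrad_works: assumes "weak_gradient u g" shows "weak_gradient u (wgrad u)"
  unfolding wgrad_def by (rule someI[of _ g]) (rule assms)

lemma trunc_id: "\<bar>s\<bar> \<le> a \<Longrightarrow> trunc a s = s"
  by (auto simp: trunc_def)

theorem proposition7p5:
  fixes p :: real and V f u \<psi> :: "'a::euclidean_space \<Rightarrow> real"
  assumes "1 < p"
    and "Linf_loc V" and "AE x in lebesgue. V x \<ge> 1"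
    and "integrable lebesgue f"
    and "localized_asymptotic_solution p V f u"
    and "W1p_loc p u" and "Linf_loc u"
    and "test_function \<psi>"
  shows "(\<integral>x. norm (wgrad u x) powr (p - 2) * (wgrad u x \<bullet> cgrad \<psi> x) \<partial>lebesgue)
         + (\<integral>x. V x * \<bar>u x\<bar> powr (p - 2) * u x * \<psi> x \<partial>lebesgue)
         = (\<integral>x. f x * \<psi> x \<partial>lebesgue)"
proof -
  interpret P: testf \<psi> by standard (rule assms(8))
  have LAS: "localized_asymptotic_solution p V f u" by (rule assms(5))
  obtain a0 :: 'a where Kbox: "P.Ks \<subseteq> box (- a0) a0"
    using bounded_subset_box_symmetric[OF compact_imp_bounded[OF P.Ks(1)]] by blast
  obtain C where C: "AE x in lebesgue. x \<in> cbox (- a0) a0 \<longrightarrow> \<bar>u x\<bar> \<le> C"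
    using assms(7) compact_cbox unfolding Linf_loc_def by blast
  define M where "M = max C 0"
  have M0: "M \<ge> 0" by (simp add: M_def)
  have AEgood: "AE x in lebesgue. x \<in> cbox (- a0) a0 \<longrightarrow> \<bar>u x\<bar> \<le> M"
    using C by eventually_elim (auto simp: M_def)
  obtain S where S0: "S \<ge> 0" and S: "\<And>x. \<bar>\<psi> x\<bar> \<le> S" using P.bounded by blast
  define t where "t = M + S + 1"
  define \<alpha> where "\<alpha> = t + S + 1"
  have t0: "t > 0" and \<alpha>0: "\<alpha> > 0" using M0 S0 by (auto simp: t_def \<alpha>_def)
  have um: "u \<in> borel_measurable lebesgue"
    using LAS unfolding localized_asymptotic_solution_def Lambda_p_def by blast
  have psim: "\<psi> \<in> borel_measurable lebesgue" by (rule cont_meas[OF P.cont])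
  have Vm: "V \<in> borel_measurable lebesgue" using assms(2) unfolding Linf_loc_def by blast
  have fm: "f \<in> borel_measurable lebesgue" using assms(4) by auto
  have cgm: "cgrad \<psi> \<in> borel_measurable lebesgue"
    using continuous_imp_measurable_on_sets_lebesgue[OF P.cgrad_cont] lebesgue_on_UNIV_eq by simp
  define Tu where "Tu = (\<lambda>x. trunc \<alpha> (u x))"
  define H where "H = Hfun \<alpha> t u \<psi>"
  have Hpt: "H x = - \<psi> x" "Tu x = u x" if "\<bar>u x\<bar> \<le> M" for x
  proof -
    have 1: "trunc \<alpha> (u x) = u x" using that S0 by (intro trunc_id) (auto simp: \<alpha>_def t_def)
    have "\<bar>u x - \<psi> x\<bar> \<le> t" using that S[of x] by (auto simp: t_def)
    then have 2: "trunc t (u x - \<psi> x) = u x - \<psi> x" by (rule trunc_id)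
    have 3: "trunc t (u x) = u x" using that S0 by (intro trunc_id) (auto simp: t_def)
    show "H x = - \<psi> x" by (simp add: H_def Hfun_def 1 2 3)
    show "Tu x = u x" by (simp add: Tu_def 1)
  qed
  have Hout: "H x = 0" if "x \<notin> P.Ks" for x
    using P.Ks(2)[OF that] by (simp add: H_def Hfun_def)
  have AEH: "AE x in lebesgue. H x = - \<psi> x"
    using AEgood
  proof eventually_elim
    fix x assume *: "x \<in> cbox (- a0) a0 \<longrightarrow> \<bar>u x\<bar> \<le> M"
    show "H x = - \<psi> x"
    proof (cases "x \<in> P.Ks")
      case True
      then have "x \<in> cbox (- a0) a0" using Kbox box_subset_cbox by blast
      then show ?thesis using * Hpt by blast
    next
      case False then show ?thesis using Hout P.Ks(2) by simp
    qed
  qed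
  have AETu: "AE x in lebesgue. x \<in> box (- a0) a0 \<longrightarrow> Tu x = u x"
    using AEgood by eventually_elim (use Hpt box_subset_cbox in blast)
  note [measurable] = um psim Vm fm cgm
  have Hm: "H \<in> borel_measurable lebesgue"
    unfolding H_def Hfun_def[abs_def] trunc_def by measurable
  have Tum: "Tu \<in> borel_measurable lebesgue"
    unfolding Tu_def trunc_def by measurable
  have wpsi: "weak_gradient (\<lambda>x. - \<psi> x) (\<lambda>x. - cgrad \<psi> x)"
    by (rule weak_gradient_uminus[OF test_weak_gradient[OF assms(8)]])
  have wH: "weak_gradient H (\<lambda>x. - cgrad \<psi> x)"
    by (rule wg_AE[OF wpsi Hm]) (use AEH in \<open>eventually_elim, simp\<close>)
  have wgH: "AE x in lebesgue. wgrad H x = - cgrad \<psi> x"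
    by (rule wg_unique[OF wgrad_works[OF wH] wH])
  obtain gT where gT: "weak_gradient Tu gT"
    using LAS \<alpha>0 unfolding localized_asymptotic_solution_def Xsp_def W1p_def Tu_def by blast
  obtain gu where gu: "weak_gradient u gu"
    using assms(6) unfolding W1p_loc_def by blast
  have wgTu: "AE x in lebesgue. x \<in> box (- a0) a0 \<longrightarrow> wgrad Tu x = wgrad u x"
    by (rule wg_unique_box[OF wgrad_works[OF gT] wgrad_works[OF gu] AETu])
  have [measurable]: "wgrad Tu \<in> borel_measurable lebesgue" by (rule wg_meas[OF wgrad_works[OF gT]])
  have [measurable]: "wgrad u \<in> borel_measurable lebesgue" by (rule wg_meas[OF wgrad_works[OF gu]])
  have [measurable]: "wgrad H \<in> borel_measurable lebesgue" by (rule wg_meas[OF wgrad_works[OF wH]])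
  note [measurable] = Hm Tum
  have p0: "p > 0" using assms(1) by simp
  have W1: "W1p p \<psi>"
    unfolding W1p_def Lp_def
  proof (intro conjI exI[of _ "cgrad \<psi>"])
    show "\<psi> \<in> borel_measurable lebesgue" by (rule psim)
    show "integrable lebesgue (\<lambda>x. \<bar>\<psi> x\<bar> powr p)"
    proof (rule CCS_leb[OF _ P.Ks(1)])
      show "continuous_on UNIV (\<lambda>x. \<bar>\<psi> x\<bar> powr p)"
        by (rule continuous_on_powr') (use p0 in \<open>auto intro!: continuous_intros P.cont\<close>)
      show "\<bar>\<psi> x\<bar> powr p = 0" if "x \<notin> P.Ks" for x using P.Ks(2)[OF that] by simp
    qed
    show "weak_gradient \<psi> (cgrad \<psi>)" by (rule test_weak_gradient[OF assms(8)])
    show "(\<lambda>x. norm (cgrad \<psi> x)) \<in> borel_measurable lebesgue" by measurable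
    show "integrable lebesgue (\<lambda>x. \<bar>norm (cgrad \<psi> x)\<bar> powr p)"
    proof (rule CCS_leb[OF _ P.Ks(1)])
      show "continuous_on UNIV (\<lambda>x. \<bar>norm (cgrad \<psi> x)\<bar> powr p)"
        by (rule continuous_on_powr') (use p0 in \<open>auto intro!: continuous_intros P.cgrad_cont\<close>)
      show "\<bar>norm (cgrad \<psi> x)\<bar> powr p = 0" if "x \<notin> P.Ks" for x using P.cgrad_zero[OF that] by simp
    qed
  qed
  have esle: "esssup lebesgue (\<lambda>x. ereal \<bar>\<psi> x\<bar>) \<le> ereal S"
  proof (rule esssup_I)
    show "(\<lambda>x. ereal \<bar>\<psi> x\<bar>) \<in> borel_measurable lebesgue" by measurable
    show "AE x in lebesgue. ereal \<bar>\<psi> x\<bar> \<le> ereal S" using S by simp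
  qed
  have Li: "Linf \<psi>"
    unfolding Linf_def using psim esle by (auto intro: le_less_trans)
  have cs: "compact_support \<psi>" using assms(8) unfolding test_function_def by blast
  have ess: "ereal \<alpha> > ereal t + esssup lebesgue (\<lambda>x. ereal \<bar>\<psi> x\<bar>)"
  proof -
    have "ereal t + esssup lebesgue (\<lambda>x. ereal \<bar>\<psi> x\<bar>) \<le> ereal t + ereal S"
      using esle by (rule add_left_mono)
    also have "\<dots> < ereal \<alpha>" by (simp add: \<alpha>_def)
    finally show ?thesis .
  qed
  have eq: "(\<integral>x. norm (wgrad Tu x) powr (p - 2) * (wgrad Tu x \<bullet> wgrad H x) \<partial>lebesgue)
          + (\<integral>x. V x * \<bar>Tu x\<bar> powr (p - 2) * Tu x * H x \<partial>lebesgue)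
          = (\<integral>x. f x * H x \<partial>lebesgue)"
    using LAS t0 W1 Li cs ess unfolding localized_asymptotic_solution_def Let_def Tu_def H_def
    by blast
  have I1: "(\<integral>x. norm (wgrad Tu x) powr (p - 2) * (wgrad Tu x \<bullet> wgrad H x) \<partial>lebesgue)
      = (\<integral>x. - (norm (wgrad u x) powr (p - 2) * (wgrad u x \<bullet> cgrad \<psi> x)) \<partial>lebesgue)"
  proof (rule integral_cong_AE)
    show "(\<lambda>x. norm (wgrad Tu x) powr (p - 2) * (wgrad Tu x \<bullet> wgrad H x)) \<in> borel_measurable lebesgue"
      by measurable
    show "(\<lambda>x. - (norm (wgrad u x) powr (p - 2) * (wgrad u x \<bullet> cgrad \<psi> x))) \<in> borel_measurable lebesgue"
      by measurable
    show "AE x in lebesgue. norm (wgrad Tu x) powr (p - 2) * (wgrad Tu x \<bullet> wgrad H x) =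
        - (norm (wgrad u x) powr (p - 2) * (wgrad u x \<bullet> cgrad \<psi> x))"
      using wgH wgTu
    proof eventually_elim
      fix x assume h1: "wgrad H x = - cgrad \<psi> x" and h2: "x \<in> box (- a0) a0 \<longrightarrow> wgrad Tu x = wgrad u x"
      show "norm (wgrad Tu x) powr (p - 2) * (wgrad Tu x \<bullet> wgrad H x) =
        - (norm (wgrad u x) powr (p - 2) * (wgrad u x \<bullet> cgrad \<psi> x))"
      proof (cases "x \<in> box (- a0) a0")
        case True then show ?thesis using h1 h2 by simp
      next
        case False
        then have "x \<notin> P.Ks" using Kbox by blast
        then show ?thesis using h1 P.cgrad_zero by simp
      qed
    qed
  qed
  have I2: "(\<integral>x. V x * \<bar>Tu x\<bar> powr (p - 2) * Tu x * H x \<partial>lebesgue)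
      = (\<integral>x. - (V x * \<bar>u x\<bar> powr (p - 2) * u x * \<psi> x) \<partial>lebesgue)"
  proof (rule integral_cong_AE)
    show "(\<lambda>x. V x * \<bar>Tu x\<bar> powr (p - 2) * Tu x * H x) \<in> borel_measurable lebesgue" by measurable
    show "(\<lambda>x. - (V x * \<bar>u x\<bar> powr (p - 2) * u x * \<psi> x)) \<in> borel_measurable lebesgue" by measurable
    show "AE x in lebesgue. V x * \<bar>Tu x\<bar> powr (p - 2) * Tu x * H x = - (V x * \<bar>u x\<bar> powr (p - 2) * u x * \<psi> x)"
      using AEgood
    proof eventually_elim
      fix x assume *: "x \<in> cbox (- a0) a0 \<longrightarrow> \<bar>u x\<bar> \<le> M"
      show "V x * \<bar>Tu x\<bar> powr (p - 2) * Tu x * H x = - (V x * \<bar>u x\<bar> powr (p - 2) * u x * \<psi> x)"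
      proof (cases "x \<in> P.Ks")
        case True
        then have "x \<in> cbox (- a0) a0" using Kbox box_subset_cbox by blast
        then show ?thesis using * Hpt by simp
      next
        case False then show ?thesis using Hout P.Ks(2) by simp
      qed
    qed
  qed
  have I3: "(\<integral>x. f x * H x \<partial>lebesgue) = (\<integral>x. - (f x * \<psi> x) \<partial>lebesgue)"
  proof (rule integral_cong_AE)
    show "(\<lambda>x. f x * H x) \<in> borel_measurable lebesgue" by measurable
    show "(\<lambda>x. - (f x * \<psi> x)) \<in> borel_measurable lebesgue" by measurable
    show "AE x in lebesgue. f x * H x = - (f x * \<psi> x)"
      using AEH by eventually_elim simp
  qed
  show ?thesis using eq unfolding I1 I2 I3 integral_minus by linarith
qed

end
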